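(* Let $H$ be a real Hilbert space, $m\ge1$ an integer, and let $g_m(\alpha,H)$ denote either $\gamma_m(\alpha,H)$ (for the Pure Greedy Algorithm) or $\gamma^o_m(\alpha,H)$ (for the Orthogonal Greedy Algorithm). Suppose that for some $\beta\in(0,1]$, some $C>0$ and some $\varphi(m)>0$ we have $g_m(\beta,H)\le C\varphi(m)^{-\beta/2}$. Then for every $\alpha\in(0,\beta)$, $$ g_m(\alpha,H)\le C^{\alpha/\beta}\varphi(m)^{-\alpha/2}.$$
   Context: A (symmetric) dictionary in $H$ is a set $\mathcal D$ of unit vectors with dense span and $g\in\mathcal D\Rightarrow -g\in\mathcal D$. $A_1(\mathcal D)$ is the closed convex hull of $\mathcal D$ and $\|f\|_{A_1(\mathcal D)}:=\inf\{M:f/M\in A_1(\mathcal D)\}$. For $f\in H$, $g(f)\in\mathcal D$ denotes an element maximizing $\langle f,g\rangle$ over $g\in\mathcal D$ (assumed to exist). PGA: $f_0:=f$, $G_0:=0$, $G_m(f,\mathcal D):=G_{m-1}(f,\mathcal D)+\langle f_{m-1},g(f_{m-1})\rangle g(f_{m-1})$, $f_m:=f-G_m(f,\mathcal D)$. OGA: $f^o_0:=f$, $G^o_m(f,\mathcal D)$ is the orthogonal projection of $f$ onto $\operatorname{span}\{g(f^o_0),\dots,g(f^o_{m-1})\}$, $f^o_m:=f-G^o_m(f,\mathcal D)$. For $\alpha\in(0,1]$, $\gamma_m(\alpha,H):=\sup \frac{\|f-G_m(f,\mathcal D)\|}{\|f\|^{1-\alpha}\|f\|^{\alpha}_{A_1(\mathcal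 D)}}$, the supremum over all dictionaries $\mathcal D$, all $f\neq0$ with $\|f\|_{A_1(\mathcal D)}<\infty$ and all possible realizations of $G_m(f,\mathcal D)$; $\gamma^o_m(\alpha,H)$ is defined the same way with $G^o_m$ in place of $G_m$. *)

theory Defs
  imports "HOL-Analysis.Analysis"
begin

definition dictionary :: "'a::real_inner set \<Rightarrow> bool" where
  "dictionary D \<longleftrightarrow> (\<forall>g\<in>D. norm g = 1) \<and> closure (span D) = UNIV \<and> (\<forall>g\<in>D. - g \<in> D)"

definition A1 :: "'a::real_inner set \<Rightarrow> 'a set" where
  "A1 D = closure (convex hull D)"

text \<open>The A_1(D) norm; infinite if no admissible M exists.\<close>
definition A1_norm :: "'a::real_inner set \<Rightarrow> 'a \<Rightarrow> ereal" where
  "A1_norm D f = Inf (ereal ` {M::real. M > 0 \<and> (1 / M) *\<^sub>R f \<in> A1 D})"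

definition orth_proj :: "'a::real_inner set \<Rightarrow> 'a \<Rightarrow> 'a" where
  "orth_proj V f = (THE p. p \<in> V \<and> (\<forall>v\<in>V. inner (f - p) v = 0))"

datatype greedy_alg = PGA | OGA

fun pga_res :: "'a::real_inner \<Rightarrow> (nat \<Rightarrow> 'a) \<Rightarrow> nat \<Rightarrow> 'a" where
  "pga_res f gs 0 = f"
| "pga_res f gs (Suc k) = pga_res f gs k - inner (pga_res f gs k) (gs k) *\<^sub>R gs k"

definition oga_res :: "'a::real_inner \<Rightarrow> (nat \<Rightarrow> 'a) \<Rightarrow> nat \<Rightarrow> 'a" where
  "oga_res f gs k = f - orth_proj (span (gs ` {..<k})) f"

fun residual :: "greedy_alg \<Rightarrow> 'a::real_inner \<Rightarrow> (nat \<Rightarrow> 'a) \<Rightarrow> nat \<Rightarrow> 'a" where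
  "residual PGA f gs k = pga_res f gs k"
| "residual OGA f gs k = oga_res f gs k"

definition greedy_choice :: "'a::real_inner set \<Rightarrow> 'a \<Rightarrow> 'a \<Rightarrow> bool" where
  "greedy_choice D r g \<longleftrightarrow> g \<in> D \<and> (\<forall>h\<in>D. inner r h \<le> inner r g)"

definition realization :: "greedy_alg \<Rightarrow> 'a::real_inner set \<Rightarrow> 'a \<Rightarrow> (nat \<Rightarrow> 'a) \<Rightarrow> nat \<Rightarrow> bool" where
  "realization alg D f gs m \<longleftrightarrow> (\<forall>k<m. greedy_choice D (residual alg f gs k) (gs k))"

text \<open>gamma_m(alpha,H) (alg = PGA) and gamma^o_m(alpha,H) (alg = OGA), H given by the type 'a.\<close>
definition gamma :: "'a::{real_inner,complete_space} itself \<Rightarrow> greedy_alg \<Rightarrow> nat \<Rightarrow> real \<Rightarrow> ereal" where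
  "gamma _ alg m \<alpha> = (SUP x \<in> {(D, f, gs). dictionary (D::'a set) \<and> f \<noteq> 0 \<and> A1_norm D f < \<infinity>
                                  \<and> realization alg D f gs m}.
      (case x of (D, f, gs) \<Rightarrow>
        ereal (norm (residual alg f gs m) /
               (norm f powr (1 - \<alpha>) * real_of_ereal (A1_norm D f) powr \<alpha>))))"

end

theory Submission
  imports Defs
begin

lemma proj_exists:
  fixes S :: "'a::real_inner set"
  assumes "finite S"
  shows "\<exists>p\<in>span S. \<forall>v\<in>span S. inner (f - p) v = 0"
  using assms
proof (induction arbitrary: f)
  case empty
  then show ?case by auto
next
  case (insert a S)
  obtain q where q: "q \<in> span S" "\<forall>v\<in>span S. inner (a - q) v = 0"
    using insert.IH by blast
  obtain p where p: "p \<in> span S" "\<forall>v\<in>span S. inner (f - p) v = 0"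
    using insert.IH by blast
  define a' where "a' = a - q"
  show ?case
  proof (cases "a' = 0")
    case True
    then have "a \<in> span S" using q a'_def by simp
    then have "span (insert a S) = span S" by (rule span_redundant)
    then show ?thesis using p by auto
  next
    case False
    define l where "l = inner (f - p) a' / inner a' a'"
    define p' where "p' = p + l *\<^sub>R a'"
    have aa: "inner a' a' \<noteq> 0" using False by simp
    have a'S: "\<forall>w\<in>span S. inner a' w = 0" using q a'_def by simp
    have sub: "span S \<subseteq> span (insert a S)" by (simp add: span_mono subset_insertI)
    have ains: "a \<in> span (insert a S)" by (simp add: span_base)
    have p'in: "p' \<in> span (insert a S)"
      unfolding p'_def a'_def
      using sub p(1) q(1) ains by (meson span_add span_diff span_scale subsetD)
    have o1: "inner (f - p') w = 0" if "w \<in> span S" for w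
      using p(2) a'S that unfolding p'_def
      by (simp add: inner_diff_left inner_add_left)
    have o2: "inner (f - p') a' = 0"
      unfolding p'_def l_def using aa
      by (simp add: inner_diff_left inner_add_left field_simps)
    have o3: "inner (f - p') a = 0"
    proof -
      have "a = a' + q" by (simp add: a'_def)
      then have "inner (f - p') a = inner (f - p') a' + inner (f - p') q"
        by (metis inner_add_right)
      then show ?thesis using o1 o2 q(1) by simp
    qed
    have "\<forall>v\<in>span (insert a S). inner (f - p') v = 0"
    proof
      fix v assume "v \<in> span (insert a S)"
      then obtain k where k: "v - k *\<^sub>R a \<in> span S"
        using span_breakdown_eq by blast
      have "v = (v - k *\<^sub>R a) + k *\<^sub>R a" by simp
      then have "inner (f - p') v = inner (f - p') (v - k *\<^sub>R a) + k * inner (f - p') a"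
        by (metis inner_add_right inner_scaleR_right)
      then show "inner (f - p') v = 0" using o1[OF k] o3 by simp
    qed
    then show ?thesis using p'in by blast
  qed
qed

lemma oga_norm_le:
  fixes f :: "'a::real_inner"
  shows "norm (oga_res f gs k) \<le> norm f"
proof -
  let ?V = "span (gs ` {..<k})"
  obtain p where p: "p \<in> ?V" "\<forall>v\<in>?V. inner (f - p) v = 0"
    using proj_exists[of "gs ` {..<k}" f] by auto
  have uniq: "q = p" if "q \<in> ?V" "\<forall>v\<in>?V. inner (f - q) v = 0" for q
  proof -
    have d: "p - q \<in> ?V" using p(1) that(1) by (simp add: span_diff)
    have "inner (f - q) (p - q) - inner (f - p) (p - q) = 0" using p(2) that(2) d by simp
    then have "inner (p - q) (p - q) = 0" by (simp add: inner_diff_left inner_diff_right)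
    then show ?thesis by simp
  qed
  have P: "p \<in> ?V \<and> (\<forall>v\<in>?V. inner (f - p) v = 0)" using p by (rule conjI)
  have U: "q = p" if "q \<in> ?V \<and> (\<forall>v\<in>?V. inner (f - q) v = 0)" for q
    using that uniq by (elim conjE)
  have "orth_proj ?V f = p"
    unfolding orth_proj_def
    by (rule the_equality, rule P, rule U)
  then have r: "oga_res f gs k = f - p" by (simp add: oga_res_def)
  have "inner (f - p) p = 0" using p(1) p(2) by blast
  then have "orthogonal (f - p) p" by (simp add: orthogonal_def)
  then have "(norm ((f - p) + p))\<^sup>2 = (norm (f - p))\<^sup>2 + (norm p)\<^sup>2"
    by (rule norm_add_Pythagorean)
  then have "(norm f)\<^sup>2 = (norm (f - p))\<^sup>2 + (norm p)\<^sup>2" by (simp only: diff_add_cancel)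
  moreover have "0 \<le> (norm p)\<^sup>2" by (rule zero_le_power2)
  ultimately have "(norm (f - p))\<^sup>2 \<le> (norm f)\<^sup>2" by linarith
  then have "norm (f - p) \<le> norm f" by (rule power2_le_imp_le[OF _ norm_ge_zero])
  then show ?thesis using r by (simp only:)
qed

lemma pga_norm_le:
  fixes f :: "'a::real_inner"
  assumes "\<forall>k<m. norm (gs k) = 1"
  shows "k \<le> m \<Longrightarrow> norm (pga_res f gs k) \<le> norm f"
proof (induction k)
  case 0
  then show ?case by simp
next
  case (Suc k)
  let ?x = "pga_res f gs k"
  let ?g = "gs k"
  have g1: "inner ?g ?g = 1" using assms Suc.prems
    by (metis Suc_le_lessD norm_eq_1)
  have "inner (?x - inner ?x ?g *\<^sub>R ?g) (inner ?x ?g *\<^sub>R ?g) = inner ?x ?g * (inner ?x ?g - inner ?x ?g * inner ?g ?g)"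
    by (simp only: inner_scaleR_right inner_diff_left inner_scaleR_left)
  then have "orthogonal (?x - inner ?x ?g *\<^sub>R ?g) (inner ?x ?g *\<^sub>R ?g)"
    using g1 by (simp add: orthogonal_def)
  then have "(norm ((?x - inner ?x ?g *\<^sub>R ?g) + inner ?x ?g *\<^sub>R ?g))\<^sup>2 = (norm (?x - inner ?x ?g *\<^sub>R ?g))\<^sup>2 + (norm (inner ?x ?g *\<^sub>R ?g))\<^sup>2"
    by (rule norm_add_Pythagorean)
  then have "(norm ?x)\<^sup>2 = (norm (?x - inner ?x ?g *\<^sub>R ?g))\<^sup>2 + (norm (inner ?x ?g *\<^sub>R ?g))\<^sup>2"
    by (simp only: diff_add_cancel)
  moreover have "0 \<le> (norm (inner ?x ?g *\<^sub>R ?g))\<^sup>2" by (rule zero_le_power2)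
  ultimately have "(norm (?x - inner ?x ?g *\<^sub>R ?g))\<^sup>2 \<le> (norm ?x)\<^sup>2" by linarith
  then have "norm (?x - inner ?x ?g *\<^sub>R ?g) \<le> norm ?x" by (rule power2_le_imp_le[OF _ norm_ge_zero])
  moreover have "norm ?x \<le> norm f" using Suc.IH Suc.prems by simp
  ultimately show ?case by simp
qed

lemma residual_norm_le:
  fixes f :: "'a::real_inner"
  assumes "realization alg D f gs m" "dictionary D"
  shows "norm (residual alg f gs m) \<le> norm f"
proof (cases alg)
  case PGA
  have n1: "\<forall>g\<in>D. norm g = 1" using assms(2) unfolding dictionary_def by simp
  have "\<forall>k<m. gs k \<in> D" using assms(1) unfolding realization_def greedy_choice_def by simp
  then have "\<forall>k<m. norm (gs k) = 1" using n1 by simp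
  then show ?thesis using PGA pga_norm_le[of m gs m f] by simp
next
  case OGA
  then show ?thesis using oga_norm_le by simp
qed

lemma A1_norm_nonneg: "A1_norm D f \<ge> 0"
  unfolding A1_norm_def by (rule Inf_greatest) auto

lemma key_ineq:
  fixes r F N K \<alpha> \<beta> :: real
  assumes r0: "0 \<le> r" and rF: "r \<le> F" and F0: "F > 0" and N0: "N > 0" and K0: "K > 0"
    and rK: "r \<le> K * (F powr (1 - \<beta>) * N powr \<beta>)"
    and "0 < \<alpha>" "\<alpha> < \<beta>"
  shows "r / (F powr (1 - \<alpha>) * N powr \<alpha>) \<le> K powr (\<alpha> / \<beta>)"
proof (cases "r = 0")
  case True
  then show ?thesis by simp
next
  case False
  then have rp: "r > 0" using r0 by simp
  define t where "t = \<alpha> / \<beta>"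
  have t0: "0 < t" "t < 1" using assms by (auto simp: t_def)
  have e1: "r = r powr (1 - t) * r powr t"
    using rp by (simp add: powr_add[symmetric])
  have m1: "r powr (1 - t) \<le> F powr (1 - t)"
    using rp t0 rF by (intro powr_mono2) auto
  have m2: "r powr t \<le> (K * (F powr (1 - \<beta>) * N powr \<beta>)) powr t"
    using rp t0 rK by (intro powr_mono2) auto
  have m3: "r powr (1 - t) * r powr t \<le> F powr (1 - t) * (K * (F powr (1 - \<beta>) * N powr \<beta>)) powr t"
    by (rule mult_mono[OF m1 m2]) auto
  have e2: "(K * (F powr (1 - \<beta>) * N powr \<beta>)) powr t = K powr t * (F powr ((1 - \<beta>) * t) * N powr (\<beta> * t))"
    using F0 N0 K0 by (simp add: powr_mult powr_powr)
  have e3: "F powr (1 - t) * F powr ((1 - \<beta>) * t) = F powr (1 - \<alpha>)"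
  proof -
    have "F powr (1 - t) * F powr ((1 - \<beta>) * t) = F powr (1 - t + (1 - \<beta>) * t)"
      by (simp add: powr_add)
    also have "1 - t + (1 - \<beta>) * t = 1 - \<alpha>" using assms by (simp add: t_def field_simps)
    finally show ?thesis .
  qed
  have e4: "\<beta> * t = \<alpha>" using assms by (simp add: t_def)
  have e5: "F powr (1 - t) * (K powr t * (F powr ((1 - \<beta>) * t) * N powr \<alpha>))
      = K powr t * ((F powr (1 - t) * F powr ((1 - \<beta>) * t)) * N powr \<alpha>)"
    by (simp only: mult_ac)
  have "r \<le> K powr t * (F powr (1 - \<alpha>) * N powr \<alpha>)"
    using m3 unfolding e1[symmetric] e2 e4 e5 e3 .
  moreover have D0: "F powr (1 - \<alpha>) * N powr \<alpha> > 0" using F0 N0 by simp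
  ultimately have "r / (F powr (1 - \<alpha>) * N powr \<alpha>) \<le> K powr t"
    by (simp only: pos_divide_le_eq[OF D0])
  then show ?thesis by (simp only: t_def)
qed

theorem lemma2p2:
  fixes alg :: greedy_alg and m :: nat and \<alpha> \<beta> C \<phi>m :: real
  assumes "m \<ge> 1" and "0 < \<beta>" and "\<beta> \<le> 1" and "C > 0" and "\<phi>m > 0"
    and "gamma TYPE('a::{real_inner,complete_space}) alg m \<beta> \<le> ereal (C * \<phi>m powr (- \<beta> / 2))"
    and "0 < \<alpha>" and "\<alpha> < \<beta>"
  shows "gamma TYPE('a) alg m \<alpha> \<le> ereal (C powr (\<alpha> / \<beta>) * \<phi>m powr (- \<alpha> / 2))"
proof -
  define K where "K = C * \<phi>m powr (- \<beta> / 2)"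
  have K0: "K > 0" using assms by (simp add: K_def)
  have Kpow: "K powr (\<alpha> / \<beta>) = C powr (\<alpha> / \<beta>) * \<phi>m powr (- \<alpha> / 2)"
    using assms unfolding K_def by (simp add: powr_mult powr_powr)
  show ?thesis
    unfolding gamma_def
  proof (rule SUP_least)
    fix x assume x: "x \<in> {(D, f, gs). dictionary (D::'a set) \<and> f \<noteq> 0 \<and> A1_norm D f < \<infinity>
                                  \<and> realization alg D f gs m}"
    then obtain D f gs where xe: "x = (D, f, gs)" and D: "dictionary (D::'a set)" and f0: "f \<noteq> 0"
      and fin: "A1_norm D f < \<infinity>" and re: "realization alg D f gs m" by auto
    define N where "N = real_of_ereal (A1_norm D f)"
    have N0: "N \<ge> 0" unfolding N_def using A1_norm_nonneg[of D f] fin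
      by (simp add: real_of_ereal_pos)
    have rF: "norm (residual alg f gs m) \<le> norm f" using residual_norm_le[OF re D] .
    have "ereal (norm (residual alg f gs m) / (norm f powr (1 - \<beta>) * N powr \<beta>))
          \<le> gamma TYPE('a) alg m \<beta>"
      unfolding gamma_def N_def using x xe by (intro SUP_upper2[of x]) auto
    then have "ereal (norm (residual alg f gs m) / (norm f powr (1 - \<beta>) * N powr \<beta>)) \<le> ereal K"
      using assms(6) unfolding K_def by (rule order_trans)
    then have rb: "norm (residual alg f gs m) / (norm f powr (1 - \<beta>) * N powr \<beta>) \<le> K"
      by (simp only: ereal_less_eq)
    have "norm (residual alg f gs m) / (norm f powr (1 - \<alpha>) * N powr \<alpha>) \<le> K powr (\<alpha> / \<beta>)"
    proof (cases "N = 0")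
      case True
      then show ?thesis using assms by simp
    next
      case False
      then have Np: "N > 0" using N0 by simp
      have dp: "norm f powr (1 - \<beta>) * N powr \<beta> > 0" using Np f0 by simp
      show ?thesis
        using key_ineq[OF norm_ge_zero rF _ Np K0 _ assms(7,8)] rb dp f0
        by (simp add: divide_le_eq)
    qed
    then show "(case x of (D, f, gs) \<Rightarrow>
        ereal (norm (residual alg f gs m) /
               (norm f powr (1 - \<alpha>) * real_of_ereal (A1_norm D f) powr \<alpha>)))
        \<le> ereal (C powr (\<alpha> / \<beta>) * \<phi>m powr (- \<alpha> / 2))"
      using xe Kpow N_def by simp
  qed
qed

end
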